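(* Let $G$ be an abelian group. Fix an imaginary unit $\hat I\in\mathbb{H}$ and identify the circle group $\mathbb{T}$ with the unit circle of $\mathbb{C}_{\hat I}$, so that $\widehat G=\mathrm{Hom}(G,\mathbb{T})\subseteq G^\delta$. The following are equivalent: (i) $\widehat G=G^\delta$; (ii) every $\phi\in\mathcal{P}^{\mathbb{H}}_*(G)$ is real-valued; (iii) $G$ has exponent $\le 2$, i.e. $2g=0$ for all $g\in G$.
   Context: $\mathbb{H}$ is the real quaternion algebra, $\mathbb{S}=\{q\in\mathbb{H}:|q|=1\}$. An imaginary unit is $I\in\mathbb{H}$ with $\mathrm{Re}\,I=0$, $|I|=1$; $\mathbb{C}_I=\mathbb{R}\oplus I\mathbb{R}$. For an abelian group $G$, $\phi:G\to\mathbb{H}$ is positive definite if for all $k$, $g_i\in G$, $q_i\in\mathbb{H}$, $\sum_{i,j=1}^k\overline{q_i}\,\phi(g_j-g_i)\,q_j$ is a nonnegative real number; $\mathcal{P}^{\mathbb{H}}_*(G)$ is the set of such $\phi$ with $\phi(0)=1$. $G^\delta=\mathrm{Hom}(G,\mathbb{S})$. *)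

theory Defs
  imports Complex_Main
begin

datatype quat = Quat (qre: real) (qim_i: real) (qim_j: real) (qim_k: real)

definition qof_real :: "real \<Rightarrow> quat" where
  "qof_real r = Quat r 0 0 0"

definition qadd :: "quat \<Rightarrow> quat \<Rightarrow> quat" where
  "qadd p q = Quat (qre p + qre q) (qim_i p + qim_i q) (qim_j p + qim_j q) (qim_k p + qim_k q)"

definition qmul :: "quat \<Rightarrow> quat \<Rightarrow> quat" where
  "qmul p q = Quat
     (qre p * qre q - qim_i p * qim_i q - qim_j p * qim_j q - qim_k p * qim_k q)
     (qre p * qim_i q + qim_i p * qre q + qim_j p * qim_k q - qim_k p * qim_j q)
     (qre p * qim_j q - qim_i p * qim_k q + qim_j p * qre q + qim_k p * qim_i q)
     (qre p * qim_k q + qim_i p * qim_j q - qim_j p * qim_i q + qim_k p * qre q)"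

definition qcnj :: "quat \<Rightarrow> quat" where
  "qcnj q = Quat (qre q) (- qim_i q) (- qim_j q) (- qim_k q)"

definition qnorm :: "quat \<Rightarrow> real" where
  "qnorm q = sqrt ((qre q)\<^sup>2 + (qim_i q)\<^sup>2 + (qim_j q)\<^sup>2 + (qim_k q)\<^sup>2)"

definition qsum :: "('b \<Rightarrow> quat) \<Rightarrow> 'b set \<Rightarrow> quat" where
  "qsum f A = Quat (\<Sum>x\<in>A. qre (f x)) (\<Sum>x\<in>A. qim_i (f x)) (\<Sum>x\<in>A. qim_j (f x)) (\<Sum>x\<in>A. qim_k (f x))"

definition qis_real :: "quat \<Rightarrow> bool" where
  "qis_real q \<longleftrightarrow> q \<in> range qof_real"

definition qsphere :: "quat set" where
  "qsphere = {q. qnorm q = 1}"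

definition imag_unit :: "quat \<Rightarrow> bool" where
  "imag_unit I \<longleftrightarrow> qre I = 0 \<and> qnorm I = 1"

definition slice :: "quat \<Rightarrow> quat set" where
  "slice I = {qadd (qof_real a) (qmul I (qof_real b)) | a b. True}"

definition pos_def_H :: "('a::ab_group_add \<Rightarrow> quat) \<Rightarrow> bool" where
  "pos_def_H \<phi> \<longleftrightarrow> (\<forall>(k::nat) (g::nat \<Rightarrow> 'a) (q::nat \<Rightarrow> quat).
     (let s = qsum (\<lambda>(i, j). qmul (qmul (qcnj (q i)) (\<phi> (g j - g i))) (q j)) ({1..k} \<times> {1..k})
      in qis_real s \<and> qre s \<ge> 0))"

definition PH_star :: "('a::ab_group_add \<Rightarrow> quat) set" where
  "PH_star = {\<phi>. pos_def_H \<phi> \<and> \<phi> 0 = qof_real 1}"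

definition Gdelta :: "('a::ab_group_add \<Rightarrow> quat) set" where
  "Gdelta = {\<chi>. (\<forall>g. \<chi> g \<in> qsphere) \<and> (\<forall>g h. \<chi> (g + h) = qmul (\<chi> g) (\<chi> h))}"

definition Ghat :: "quat \<Rightarrow> ('a::ab_group_add \<Rightarrow> quat) set" where
  "Ghat I = {\<chi>. (\<forall>g. \<chi> g \<in> qsphere \<inter> slice I) \<and> (\<forall>g h. \<chi> (g + h) = qmul (\<chi> g) (\<chi> h))}"

end

theory Submission
  imports Defs Complex_Main
begin


instantiation quat :: ring_1
begin
definition "0 = Quat 0 0 0 0"
definition "1 = Quat 1 0 0 0"
definition "p + q = qadd p q"
definition "- q = Quat (- qre q) (- qim_i q) (- qim_j q) (- qim_k q)"
definition "p - q = p + (- (q::quat))"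
definition "p * q = qmul p q"
instance
  by standard (auto simp: zero_quat_def one_quat_def plus_quat_def uminus_quat_def
     minus_quat_def times_quat_def qadd_def qmul_def algebra_simps intro: quat.expand)
end

lemma quat_simps[simp]:
  "qre 0 = 0" "qim_i 0 = 0" "qim_j 0 = 0" "qim_k 0 = 0"
  "qre 1 = 1" "qim_i 1 = 0" "qim_j 1 = 0" "qim_k 1 = 0"
  "qre (p + q) = qre p + qre q" "qim_i (p + q) = qim_i p + qim_i q"
  "qim_j (p + q) = qim_j p + qim_j q" "qim_k (p + q) = qim_k p + qim_k q"
  "qre (p * q) = qre p * qre q - qim_i p * qim_i q - qim_j p * qim_j q - qim_k p * qim_k q"
  "qim_i (p * q) = qre p * qim_i q + qim_i p * qre q + qim_j p * qim_k q - qim_k p * qim_j q"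
  "qim_j (p * q) = qre p * qim_j q - qim_i p * qim_k q + qim_j p * qre q + qim_k p * qim_i q"
  "qim_k (p * q) = qre p * qim_k q + qim_i p * qim_j q - qim_j p * qim_i q + qim_k p * qre q"
  by (simp_all add: zero_quat_def one_quat_def plus_quat_def times_quat_def qadd_def qmul_def)

lemma qadd_eq: "qadd p q = p + q" by (simp add: plus_quat_def)
lemma qmul_eq: "qmul p q = p * q" by (simp add: times_quat_def)

lemma sum_comps: "qre (sum f A) = (\<Sum>x\<in>A. qre (f x))" "qim_i (sum f A) = (\<Sum>x\<in>A. qim_i (f x))"
  "qim_j (sum f A) = (\<Sum>x\<in>A. qim_j (f x))" "qim_k (sum f A) = (\<Sum>x\<in>A. qim_k (f x))"
  by (induction A rule: infinite_finite_induct; simp)+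

lemma qsum_eq: "qsum f A = sum f A"
  unfolding qsum_def by (rule quat.expand) (simp add: sum_comps)

lemma qcnj_add: "qcnj (p + q) = qcnj p + qcnj q"
  by (rule quat.expand) (simp add: qcnj_def)
lemma qcnj_mul: "qcnj (p * q) = qcnj q * qcnj p"
  by (rule quat.expand) (simp add: qcnj_def algebra_simps)
lemma qcnj_sum: "qcnj (sum f A) = (\<Sum>x\<in>A. qcnj (f x))"
  by (induction A rule: infinite_finite_induct) (simp_all add: qcnj_add, simp_all add: qcnj_def zero_quat_def)

definition nsq :: "quat \<Rightarrow> real" where
  "nsq q = (qre q)\<^sup>2 + (qim_i q)\<^sup>2 + (qim_j q)\<^sup>2 + (qim_k q)\<^sup>2"

lemma qcnj_self: "qcnj q * q = qof_real (nsq q)"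
  by (rule quat.expand) (simp add: qcnj_def qof_real_def nsq_def power2_eq_square)
lemma self_qcnj: "q * qcnj q = qof_real (nsq q)"
  by (rule quat.expand) (simp add: qcnj_def qof_real_def nsq_def power2_eq_square)

lemma qnorm_nsq: "qnorm q = 1 \<longleftrightarrow> nsq q = 1"
  by (simp add: qnorm_def nsq_def)

lemma qof_real_1: "qof_real 1 = 1" by (simp add: qof_real_def one_quat_def)



lemma qis_real_iff: "qis_real q \<longleftrightarrow> qim_i q = 0 \<and> qim_j q = 0 \<and> qim_k q = 0"
  unfolding qis_real_def qof_real_def
  by (cases q) (auto simp: image_def)

lemma two_set: "{1..2::nat} \<times> {1..2::nat} = {(1,1),(1,2),(2,1),(2,2)}" by auto

lemma pd2:
  assumes "pos_def_H \<phi>" "\<phi> 0 = qof_real 1" "(g::'a::ab_group_add) + g = 0"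
  shows "qis_real (\<phi> g)"
proof -
  have mg: "- g = g" using assms(3) by (simp add: add_eq_0_iff)
  let ?G = "\<lambda>n::nat. if n = 1 then 0 else g"
  have h: "qis_real (qsum (\<lambda>(i, j). qmul (qmul (qcnj (q i)) (\<phi> (?G j - ?G i))) (q j)) ({1..2} \<times> {1..2}))" for q
    using spec[OF spec[OF spec[OF assms(1)[unfolded pos_def_H_def Let_def], of 2], of ?G], of q] by blast
  have e: "qis_real (qcnj 1 * 1 + qcnj 1 * \<phi> g * e + qcnj e * \<phi> g * 1 + qcnj e * e)" for e
    using h[of "\<lambda>n. if n = 1 then 1 else e", unfolded qsum_eq two_set] assms(2)
    by (simp add: qmul_eq mg qof_real_1 add_ac)
  show ?thesis
    using e[of "Quat 0 1 0 0"] e[of "Quat 0 0 1 0"]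
    by (simp add: qis_real_iff qcnj_def)
qed



lemma Gdelta_D:
  assumes "\<chi> \<in> Gdelta"
  shows "nsq (\<chi> x) = 1" "\<chi> (x + y) = \<chi> x * \<chi> y"
  using assms by (auto simp: Gdelta_def qsphere_def qnorm_nsq qmul_eq)

lemma Gdelta_0: assumes "\<chi> \<in> Gdelta" shows "\<chi> 0 = 1"
proof -
  have "\<chi> 0 = \<chi> 0 * \<chi> 0" using Gdelta_D(2)[OF assms, of 0 0] by simp
  hence "qcnj (\<chi> 0) * \<chi> 0 = qcnj (\<chi> 0) * \<chi> 0 * \<chi> 0" by (simp add: mult.assoc)
  thus ?thesis using qcnj_self[of "\<chi> 0"] Gdelta_D(1)[OF assms] by (simp add: qof_real_1)
qed

lemma Gdelta_neg: assumes "\<chi> \<in> Gdelta" shows "\<chi> (- x) = qcnj (\<chi> x)"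
proof -
  have "\<chi> x * \<chi> (- x) = 1" using Gdelta_D(2)[OF assms, of x "- x"] Gdelta_0[OF assms] by simp
  hence "qcnj (\<chi> x) * (\<chi> x * \<chi> (- x)) = qcnj (\<chi> x)" by simp
  thus ?thesis using qcnj_self[of "\<chi> x"] Gdelta_D(1)[OF assms] by (simp add: qof_real_1 mult.assoc[symmetric])
qed

lemma Gdelta_PH: assumes "\<chi> \<in> Gdelta" shows "\<chi> \<in> PH_star"
proof -
  have "pos_def_H \<chi>"
    unfolding pos_def_H_def Let_def
  proof (intro allI)
    fix k :: nat and g :: "nat \<Rightarrow> 'a" and q :: "nat \<Rightarrow> quat"
    define u where "u j = \<chi> (g j) * q j" for j
    have t: "qmul (qmul (qcnj (q i)) (\<chi> (g j - g i))) (q j) = qcnj (u i) * u j" for i j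
    proof -
      have "\<chi> (g j - g i) = qcnj (\<chi> (g i)) * \<chi> (g j)"
        using Gdelta_D(2)[OF assms, of "- g i" "g j"] Gdelta_neg[OF assms, of "g i"]
        by (simp add: add.commute)
      thus ?thesis by (simp add: u_def qmul_eq qcnj_mul mult.assoc)
    qed
    have "qsum (\<lambda>(i, j). qmul (qmul (qcnj (q i)) (\<chi> (g j - g i))) (q j)) ({1..k} \<times> {1..k})
        = (\<Sum>(i,j)\<in>{1..k} \<times> {1..k}. qcnj (u i) * u j)"
      by (simp add: qsum_eq t)
    also have "\<dots> = (\<Sum>i\<in>{1..k}. \<Sum>j\<in>{1..k}. qcnj (u i) * u j)"
      by (rule sum.cartesian_product[symmetric])
    also have "\<dots> = qcnj (sum u {1..k}) * sum u {1..k}"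
      by (simp add: qcnj_sum sum_product)
    also have "\<dots> = qof_real (nsq (sum u {1..k}))" by (rule qcnj_self)
    finally show "qis_real (qsum (\<lambda>(i, j). qmul (qmul (qcnj (q i)) (\<chi> (g j - g i))) (q j)) ({1..k} \<times> {1..k})) \<and>
       0 \<le> qre (qsum (\<lambda>(i, j). qmul (qmul (qcnj (q i)) (\<chi> (g j - g i))) (q j)) ({1..k} \<times> {1..k}))"
      by (simp add: qis_real_def qof_real_def nsq_def)
  qed
  thus ?thesis using Gdelta_0[OF assms] by (simp add: PH_star_def qof_real_1)
qed

lemma sq1_real:
  assumes "x * x = (1::quat)" shows "x = qof_real (qre x)"
proof -
  have e: "qre x * qre x - qim_i x * qim_i x - qim_j x * qim_j x - qim_k x * qim_k x = 1"
    "2 * qre x * qim_i x = 0" "2 * qre x * qim_j x = 0" "2 * qre x * qim_k x = 0"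
    using arg_cong[OF assms, of qre] arg_cong[OF assms, of qim_i] arg_cong[OF assms, of qim_j]
       arg_cong[OF assms, of qim_k] by (simp_all add: algebra_simps)
  have "qre x \<noteq> 0"
  proof
    assume "qre x = 0"
    with e(1) have "- (qim_i x * qim_i x + qim_j x * qim_j x + qim_k x * qim_k x) = 1" by simp
    moreover have "qim_i x * qim_i x + qim_j x * qim_j x + qim_k x * qim_k x \<ge> 0" by simp
    ultimately show False by linarith
  qed
  with e show ?thesis by (cases x) (simp add: qof_real_def)
qed

lemma iii_i:
  assumes "\<forall>g::'a::ab_group_add. g + g = 0"
  shows "(Ghat I :: ('a \<Rightarrow> quat) set) = Gdelta"
proof
  show "Ghat I \<subseteq> Gdelta" by (auto simp: Ghat_def Gdelta_def)
  show "Gdelta \<subseteq> (Ghat I :: ('a \<Rightarrow> quat) set)"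
  proof
    fix \<chi> :: "'a \<Rightarrow> quat" assume c: "\<chi> \<in> Gdelta"
    have "\<chi> g \<in> slice I" for g
    proof -
      have "\<chi> g * \<chi> g = 1" using Gdelta_D(2)[OF c, of g g] Gdelta_0[OF c] assms by simp
      hence "\<chi> g = qof_real (qre (\<chi> g))" by (rule sq1_real)
      hence "\<chi> g = qadd (qof_real (qre (\<chi> g))) (qmul I (qof_real 0))"
        by (simp add: qadd_eq qmul_eq) (simp add: qof_real_def zero_quat_def[symmetric])
      thus ?thesis unfolding slice_def by blast
    qed
    thus "\<chi> \<in> Ghat I" using c by (auto simp: Ghat_def Gdelta_def)
  qed
qed



primrec nmul :: "nat \<Rightarrow> 'a::ab_group_add \<Rightarrow> 'a" where
  "nmul 0 x = 0" | "nmul (Suc n) x = x + nmul n x"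

lemma nmul_add: "nmul (m + n) x = nmul m x + nmul n x"
  by (induction m) (simp_all add: add.assoc)
lemma nmul_mult: "nmul (m * n) x = nmul m (nmul n x)"
  by (induction m) (simp_all add: nmul_add)
lemma nmul_zero[simp]: "nmul n 0 = (0::'a::ab_group_add)"
  by (induction n) simp_all
lemma nmul_one[simp]: "nmul 1 x = x" by simp
lemma nmul_diff: "q \<le> p \<Longrightarrow> nmul p x - nmul q x = nmul (p - q) x"
  using nmul_add[of "p - q" q x] by simp
lemma nmul_mod: "nmul n x = nmul (n mod N) x + nmul (n div N) (nmul N x)"
proof -
  have "nmul n x = nmul (n mod N + n div N * N) x" by (simp only: mod_div_mult_eq)
  thus ?thesis by (simp only: nmul_add nmul_mult)
qed

definition ph :: "('a::ab_group_add \<times> complex) set \<Rightarrow> bool" where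
  "ph R \<longleftrightarrow> (0,1) \<in> R \<and> (\<forall>x a y b. (x,a)\<in>R \<longrightarrow> (y,b)\<in>R \<longrightarrow> (x - y, a / b) \<in> R)
     \<and> (\<forall>x a b. (x,a)\<in>R \<longrightarrow> (x,b)\<in>R \<longrightarrow> a = b) \<and> (\<forall>x a. (x,a)\<in>R \<longrightarrow> cmod a = 1)"

lemma phD:
  assumes "ph R"
  shows "(0,1) \<in> R" "(x,a)\<in>R \<Longrightarrow> (y,b)\<in>R \<Longrightarrow> (x - y, a / b) \<in> R"
    "(x,a)\<in>R \<Longrightarrow> (x,b)\<in>R \<Longrightarrow> a = b" "(x,a)\<in>R \<Longrightarrow> cmod a = 1"
  using assms unfolding ph_def by blast+

lemma ph_neg: "ph R \<Longrightarrow> (x,a)\<in>R \<Longrightarrow> (- x, 1 / a) \<in> R"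
  using phD(2)[of R 0 1 x a] phD(1)[of R] by simp

lemma ph_add: "ph R \<Longrightarrow> (x,a)\<in>R \<Longrightarrow> (y,b)\<in>R \<Longrightarrow> (x + y, a * b) \<in> R"
  using phD(2)[of R x a "- y" "1 / b"] ph_neg[of R y b] by simp

lemma ph_nz: "ph R \<Longrightarrow> (x,a)\<in>R \<Longrightarrow> a \<noteq> 0"
  using phD(4) by fastforce

lemma ph_nmul: "ph R \<Longrightarrow> (x,a)\<in>R \<Longrightarrow> (nmul n x, a ^ n) \<in> R"
  by (induction n) (simp_all add: phD(1) ph_add)

definition ext :: "('a::ab_group_add \<times> complex) set \<Rightarrow> 'a \<Rightarrow> complex \<Rightarrow> ('a \<times> complex) set" where
  "ext R x w = {(h + nmul n x - nmul m x, a * w ^ n / w ^ m) | h a n m. (h,a) \<in> R}"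

definition compat :: "('a::ab_group_add \<times> complex) set \<Rightarrow> 'a \<Rightarrow> complex \<Rightarrow> bool" where
  "compat R x w \<longleftrightarrow> cmod w = 1 \<and> (\<forall>n c. (nmul n x, c) \<in> R \<longrightarrow> c = w ^ n)"

lemma compat_key:
  assumes R: "ph R" and c: "compat R x w" and m: "(nmul p x - nmul q x, c) \<in> R"
  shows "c = w ^ p / w ^ q"
proof -
  have w0: "w \<noteq> 0" using c by (auto simp: compat_def)
  show ?thesis
  proof (cases "q \<le> p")
    case True
    then have "c = w ^ (p - q)" using m c by (simp add: nmul_diff compat_def)
    thus ?thesis using power_diff[OF w0 True] by simp
  next
    case False
    have "nmul q x - nmul p x = nmul (q - p) x" using False by (simp add: nmul_diff)
    hence "nmul p x - nmul q x = - nmul (q - p) x" by (metis minus_diff_eq)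
    hence "(nmul (q - p) x, 1 / c) \<in> R" using ph_neg[OF R m] by simp
    hence "1 / c = w ^ (q - p)" using c by (simp add: compat_def)
    moreover have "w ^ q = w ^ p * w ^ (q - p)" using False by (simp add: power_add[symmetric])
    ultimately show ?thesis using w0 ph_nz[OF R m] by (auto simp: divide_simps mult.commute)
  qed
qed

lemma ext_ph:
  assumes R: "ph R" and c: "compat R x w"
  shows "ph (ext R x w)" "R \<subseteq> ext R x w" "(x, w) \<in> ext R x w"
proof -
  have w0: "w \<noteq> 0" and w1: "cmod w = 1" using c by (auto simp: compat_def)
  show "R \<subseteq> ext R x w"
  proof
    fix p assume "p \<in> R"
    then obtain h a where "p = (h, a)" "(h,a) \<in> R" by (cases p) auto
    thus "p \<in> ext R x w" unfolding ext_def
      by (intro CollectI exI[of _ h] exI[of _ a] exI[of _ 0] exI[of _ 0]) simp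
  qed
  show "(x, w) \<in> ext R x w" unfolding ext_def
    using phD(1)[OF R] by (intro CollectI exI[of _ 0] exI[of _ 1] exI[of _ 1] exI[of _ 0]) simp
  show "ph (ext R x w)"
    unfolding ph_def
  proof (intro conjI allI impI)
    show "(0, 1) \<in> ext R x w" unfolding ext_def
      using phD(1)[OF R] by (intro CollectI exI[of _ 0] exI[of _ 1] exI[of _ 0] exI[of _ 0]) simp
  next
    fix y a z b assume "(y, a) \<in> ext R x w" "(z, b) \<in> ext R x w"
    then obtain h1 a1 n1 m1 h2 a2 n2 m2 where
      1: "y = h1 + nmul n1 x - nmul m1 x" "a = a1 * w ^ n1 / w ^ m1" "(h1,a1) \<in> R" and
      2: "z = h2 + nmul n2 x - nmul m2 x" "b = a2 * w ^ n2 / w ^ m2" "(h2,a2) \<in> R"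
      unfolding ext_def by blast
    have a2: "a2 \<noteq> 0" using ph_nz[OF R 2(3)] .
    have "y - z = (h1 - h2) + nmul (n1 + m2) x - nmul (m1 + n2) x"
      by (simp only: 1(1) 2(1) nmul_add) (simp add: algebra_simps)
    moreover have "a / b = (a1 / a2) * w ^ (n1 + m2) / w ^ (m1 + n2)"
      unfolding 1(2) 2(2) using w0 a2 by (simp add: power_add field_simps)
    moreover have "(h1 - h2, a1 / a2) \<in> R" using phD(2)[OF R 1(3) 2(3)] .
    ultimately show "(y - z, a / b) \<in> ext R x w" unfolding ext_def by blast
  next
    fix y a b assume "(y, a) \<in> ext R x w" "(y, b) \<in> ext R x w"
    then obtain h1 a1 n1 m1 h2 a2 n2 m2 where
      1: "y = h1 + nmul n1 x - nmul m1 x" "a = a1 * w ^ n1 / w ^ m1" "(h1,a1) \<in> R" and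
      2: "y = h2 + nmul n2 x - nmul m2 x" "b = a2 * w ^ n2 / w ^ m2" "(h2,a2) \<in> R"
      unfolding ext_def by blast
    have a2: "a2 \<noteq> 0" using ph_nz[OF R 2(3)] .
    have "h1 - h2 = nmul (n2 + m1) x - nmul (n1 + m2) x"
      using 1(1) 2(1) by (simp only: nmul_add) (metis (no_types, lifting) add_diff_cancel_right' diff_diff_eq2 diff_add_eq_diff_diff_swap add.commute diff_diff_eq)
    hence "(nmul (n2 + m1) x - nmul (n1 + m2) x, a1 / a2) \<in> R" using phD(2)[OF R 1(3) 2(3)] by simp
    hence "a1 / a2 = w ^ (n2 + m1) / w ^ (n1 + m2)" by (rule compat_key[OF R c])
    thus "a = b" unfolding 1(2) 2(2) using w0 a2 by (simp add: power_add field_simps)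
  next
    fix y a assume "(y, a) \<in> ext R x w"
    then obtain h1 a1 n1 m1 where
      1: "y = h1 + nmul n1 x - nmul m1 x" "a = a1 * w ^ n1 / w ^ m1" "(h1,a1) \<in> R"
      unfolding ext_def by blast
    show "cmod a = 1" using 1 phD(4)[OF R 1(3)] w1 by (simp add: norm_mult norm_divide norm_power)
  qed
qed

lemma unit_root:
  assumes "cmod c = 1" "N > 0"
  shows "\<exists>w. cmod w = 1 \<and> w ^ N = c"
proof -
  obtain r a where ra: "c = rcis r a" using rcis_Ex by blast
  hence "\<bar>r\<bar> = 1" using assms(1) by simp
  hence "\<exists>t. c = cis t"
  proof (cases "r = 1")
    case True thus ?thesis using ra cis_rcis_eq by auto
  next
    case False
    hence "r = -1" using \<open>\<bar>r\<bar> = 1\<close> by auto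
    hence "c = cis pi * cis a" using ra by (simp add: rcis_def)
    hence "c = cis (pi + a)" by (simp only: cis_mult)
    thus ?thesis by blast
  qed
  then obtain t where t: "c = cis t" by blast
  have "cis (t / N) ^ N = cis t" using assms(2) by (simp add: DeMoivre)
  thus ?thesis using t by (intro exI[of _ "cis (t / N)"]) simp
qed

lemma compat_exists:
  assumes R: "ph R"
  shows "\<exists>w. compat R x w"
proof (cases "\<exists>n c. n > 0 \<and> (nmul n x, c) \<in> R")
  case False
  have "compat R x 1" unfolding compat_def
  proof (intro conjI allI impI)
    fix n c assume "(nmul n x, c) \<in> R"
    with False have "n = 0" by (metis gr0I)
    with \<open>(nmul n x, c) \<in> R\<close> have "(0, c) \<in> R" by simp
    from phD(3)[OF R this phD(1)[OF R]] show "c = 1 ^ n" by simp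
  qed simp
  thus ?thesis by blast
next
  case True
  define N where "N = (LEAST n. n > 0 \<and> (\<exists>c. (nmul n x, c) \<in> R))"
  have N: "N > 0 \<and> (\<exists>c. (nmul N x, c) \<in> R)"
    unfolding N_def by (rule LeastI_ex) (use True in blast)
  then obtain cN where cN: "(nmul N x, cN) \<in> R" by blast
  obtain w where w: "cmod w = 1" "w ^ N = cN" using unit_root[of cN N] phD(4)[OF R cN] N by blast
  have "compat R x w" unfolding compat_def
  proof (intro conjI allI impI)
    fix n c assume nc: "(nmul n x, c) \<in> R"
    have q: "(nmul (n div N) (nmul N x), cN ^ (n div N)) \<in> R" by (rule ph_nmul[OF R cN])
    have "nmul (n mod N) x = nmul n x - nmul (n div N) (nmul N x)"
      using nmul_mod[of n x N] by (simp add: algebra_simps)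
    hence r: "(nmul (n mod N) x, c / cN ^ (n div N)) \<in> R" using phD(2)[OF R nc q] by simp
    have "n mod N = 0"
    proof (rule ccontr)
      assume "n mod N \<noteq> 0"
      hence "0 < n mod N \<and> (\<exists>c. (nmul (n mod N) x, c) \<in> R)" using r by auto
      hence "N \<le> n mod N" unfolding N_def by (rule Least_le)
      thus False using N mod_less_divisor[of N n] by linarith
    qed
    hence "nmul n x = nmul (n div N) (nmul N x)" using nmul_mod[of n x N] by simp
    hence "c = cN ^ (n div N)" using nc q phD(3)[OF R, of "nmul n x" c] by simp
    also have "\<dots> = w ^ (N * (n div N))" by (simp add: w(2)[symmetric] power_mult)
    also have "N * (n div N) = n" using mult_div_mod_eq[of N n] \<open>n mod N = 0\<close> by simp
    finally show "c = w ^ n" .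
  qed (use w in simp)
  thus ?thesis by blast
qed



lemma ph_single: "ph {(0::'a::ab_group_add, 1::complex)}"
  unfolding ph_def by auto

lemma base:
  assumes g: "(g::'a::ab_group_add) + g \<noteq> 0"
  shows "\<exists>z. compat {(0,1)} g z \<and> Im z \<noteq> 0"
proof (cases "\<exists>n>0. nmul n g = 0")
  case False
  have "compat {(0,1)} g \<i>" unfolding compat_def
  proof (intro conjI allI impI)
    fix n c assume "(nmul n g, c) \<in> {(0::'a, 1::complex)}"
    hence "nmul n g = 0" "c = 1" by auto
    with False have "n = 0" by (metis gr0I)
    thus "c = \<i> ^ n" using \<open>c = 1\<close> by simp
  qed simp
  thus ?thesis by (intro exI[of _ \<i>]) simp
next
  case True
  define N where "N = (LEAST n. n > 0 \<and> nmul n g = 0)"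
  have N: "N > 0 \<and> nmul N g = 0"
    unfolding N_def by (rule LeastI_ex) (use True in blast)
  have "N \<noteq> 1" using N g by auto
  moreover have "N \<noteq> 2" using N g by (auto simp: numeral_2_eq_2)
  ultimately have N3: "N > 2" using N by linarith
  define z where "z = cis (2 * pi / N)"
  have "compat {(0,1)} g z" unfolding compat_def
  proof (intro conjI allI impI)
    show "cmod z = 1" by (simp add: z_def)
    fix n c assume "(nmul n g, c) \<in> {(0::'a, 1::complex)}"
    hence n0: "nmul n g = 0" "c = 1" by auto
    have "nmul (n mod N) g = 0" using nmul_mod[of n g N] n0 N by simp
    have "n mod N = 0"
    proof (rule ccontr)
      assume "n mod N \<noteq> 0"
      hence "0 < n mod N \<and> nmul (n mod N) g = 0" using \<open>nmul (n mod N) g = 0\<close> by auto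
      hence "N \<le> n mod N" unfolding N_def by (rule Least_le)
      thus False using N mod_less_divisor[of N n] by linarith
    qed
    hence nN: "n = N * (n div N)" using mult_div_mod_eq[of N n] by simp
    have "real n * (2 * pi / N) = 2 * pi * real (n div N)"
      using N by (subst nN) (simp add: field_simps)
    hence "z ^ n = cis (2 * pi * real (n div N))" by (simp add: z_def DeMoivre)
    also have "\<dots> = 1" by (rule cis_multiple_2pi) simp
    finally show "c = z ^ n" using n0 by simp
  qed
  moreover have "Im z \<noteq> 0"
  proof -
    have "2 * pi / N < pi" using N3 by (simp add: field_simps)
    hence "sin (2 * pi / N) > 0" using N by (intro sin_gt_zero) simp_all
    thus ?thesis by (simp add: z_def)
  qed
  ultimately show ?thesis by blast
qed

lemma char_exists:
  assumes "(g::'a::ab_group_add) + g \<noteq> 0"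
  shows "\<exists>\<psi>::'a\<Rightarrow>complex. (\<forall>x. cmod (\<psi> x) = 1) \<and> (\<forall>x y. \<psi> (x + y) = \<psi> x * \<psi> y) \<and> Im (\<psi> g) \<noteq> 0"
proof -
  obtain z where z: "compat {(0,1)} g z" "Im z \<noteq> 0" using base[OF assms] by blast
  define R0 where "R0 = ext {(0,1)} g z"
  have R0: "ph R0" "(g, z) \<in> R0" using ext_ph[OF ph_single z(1)] by (simp_all add: R0_def)
  define A where "A = {R. ph R \<and> R0 \<subseteq> R}"
  have "\<exists>M\<in>A. \<forall>X\<in>A. M \<subseteq> X \<longrightarrow> X = M"
  proof (rule Zorn_Lemma2, intro ballI)
    fix C assume C: "C \<in> chains A"
    show "\<exists>U\<in>A. \<forall>X\<in>C. X \<subseteq> U"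
    proof (cases "C = {}")
      case True thus ?thesis using R0 by (auto simp: A_def)
    next
      case False
      have CA: "C \<subseteq> A" and ch: "\<And>X Y. X \<in> C \<Longrightarrow> Y \<in> C \<Longrightarrow> X \<subseteq> Y \<or> Y \<subseteq> X"
        using C by (auto simp: chains_def chain_subset_def)
      have two: "\<exists>X\<in>C. p \<in> X \<and> q \<in> X" if "p \<in> \<Union>C" "q \<in> \<Union>C" for p q
        using that ch by blast
      have "ph (\<Union>C)" unfolding ph_def
      proof (intro conjI allI impI)
        obtain X where "X \<in> C" using False by blast
        thus "(0, 1) \<in> \<Union>C" using CA phD(1) by (auto simp: A_def)
      next
        fix x a y b assume "(x, a) \<in> \<Union>C" "(y, b) \<in> \<Union>C"
        then obtain X where "X \<in> C" "(x,a) \<in> X" "(y,b) \<in> X" using two by blast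
        moreover have "ph X" using CA \<open>X \<in> C\<close> by (auto simp: A_def)
        ultimately show "(x - y, a / b) \<in> \<Union>C" using phD(2)[of X] by blast
      next
        fix x a b assume "(x, a) \<in> \<Union>C" "(x, b) \<in> \<Union>C"
        then obtain X where "X \<in> C" "(x,a) \<in> X" "(x,b) \<in> X" using two by blast
        moreover have "ph X" using CA \<open>X \<in> C\<close> by (auto simp: A_def)
        ultimately show "a = b" using phD(3)[of X x a b] by blast
      next
        fix x a assume "(x, a) \<in> \<Union>C"
        then obtain X where "X \<in> C" "(x,a) \<in> X" by blast
        moreover have "ph X" using CA \<open>X \<in> C\<close> by (auto simp: A_def)
        ultimately show "cmod a = 1" using phD(4)[of X x a] by blast
      qed
      moreover have "R0 \<subseteq> \<Union>C" using False CA by (auto simp: A_def)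
      ultimately show ?thesis by (intro bexI[of _ "\<Union>C"]) (auto simp: A_def)
    qed
  qed
  then obtain M where MA: "M \<in> A" and Mmax: "\<forall>X\<in>A. M \<subseteq> X \<longrightarrow> X = M" by blast
  have M: "ph M" "R0 \<subseteq> M" using MA by (auto simp: A_def)
  have tot: "\<exists>a. (y, a) \<in> M" for y
  proof (rule ccontr)
    assume nin: "\<not> (\<exists>a. (y, a) \<in> M)"
    obtain w where w: "compat M y w" using compat_exists[OF M(1)] by blast
    have e: "ph (ext M y w)" "M \<subseteq> ext M y w" "(y, w) \<in> ext M y w" using ext_ph[OF M(1) w] by auto
    hence "ext M y w \<in> A" using M(2) by (auto simp: A_def)
    hence "ext M y w = M" using Mmax e(2) by blast
    thus False using e(3) nin by auto
  qed
  define \<psi> where "\<psi> y = (THE a. (y, a) \<in> M)" for y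
  have psi: "(y, \<psi> y) \<in> M" for y
  proof -
    obtain a where a: "(y, a) \<in> M" using tot by blast
    have "(THE a. (y, a) \<in> M) = a" by (metis a phD(3)[OF M(1)] the_equality)
    thus ?thesis using a by (simp add: \<psi>_def)
  qed
  have eq: "(y, a) \<in> M \<Longrightarrow> \<psi> y = a" for y a using phD(3)[OF M(1) psi[of y]] by simp
  show ?thesis
  proof (intro exI[of _ \<psi>] conjI allI)
    show "cmod (\<psi> x) = 1" for x using phD(4)[OF M(1) psi] .
    show "\<psi> (x + y) = \<psi> x * \<psi> y" for x y using eq[OF ph_add[OF M(1) psi psi]] .
    show "Im (\<psi> g) \<noteq> 0" using eq[of g z] R0(2) M(2) z(2) by auto
  qed
qed



definition emb :: "quat \<Rightarrow> complex \<Rightarrow> quat" where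
  "emb J z = Quat (Re z) (Im z * qim_i J) (Im z * qim_j J) (Im z * qim_k J)"

lemma emb_mult:
  assumes "(qim_i J)\<^sup>2 + (qim_j J)\<^sup>2 + (qim_k J)\<^sup>2 = 1"
  shows "emb J (z * w) = emb J z * emb J w"
proof -
  have "Im z * Im w = Im z * Im w * ((qim_i J)\<^sup>2 + (qim_j J)\<^sup>2 + (qim_k J)\<^sup>2)" using assms by simp
  thus ?thesis by (intro quat.expand) (simp add: emb_def algebra_simps power2_eq_square)
qed

lemma emb_nsq:
  assumes "(qim_i J)\<^sup>2 + (qim_j J)\<^sup>2 + (qim_k J)\<^sup>2 = 1"
  shows "nsq (emb J z) = (cmod z)\<^sup>2"
proof -
  have "(Im z)\<^sup>2 = (Im z)\<^sup>2 * ((qim_i J)\<^sup>2 + (qim_j J)\<^sup>2 + (qim_k J)\<^sup>2)" using assms by simp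
  thus ?thesis by (simp add: nsq_def emb_def cmod_power2 power_mult_distrib algebra_simps)
qed

lemma exists_J:
  assumes "imag_unit I"
  shows "\<exists>J. (qim_i J)\<^sup>2 + (qim_j J)\<^sup>2 + (qim_k J)\<^sup>2 = 1 \<and> (\<forall>z. emb J z \<in> slice I \<longrightarrow> Im z = 0)"
proof -
  have I0: "qre I = 0" and I1: "(qim_i I)\<^sup>2 + (qim_j I)\<^sup>2 + (qim_k I)\<^sup>2 = 1"
    using assms by (auto simp: imag_unit_def qnorm_def)
  have sl: "emb J z \<in> slice I \<Longrightarrow> \<exists>b. Im z * qim_i J = b * qim_i I \<and> Im z * qim_j J = b * qim_j I \<and> Im z * qim_k J = b * qim_k I" for J z
  proof -
    assume "emb J z \<in> slice I"
    then obtain a b where E: "emb J z = qadd (qof_real a) (qmul I (qof_real b))" unfolding slice_def by blast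
    show ?thesis
      using arg_cong[OF E, of qim_i] arg_cong[OF E, of qim_j] arg_cong[OF E, of qim_k]
      by (intro exI[of _ b]) (simp add: emb_def qadd_eq qmul_eq qof_real_def mult.commute)
  qed
  show ?thesis
  proof (cases "qim_j I = 0 \<and> qim_k I = 0")
    case True
    hence "qim_i I \<noteq> 0" using I1 by auto
    show ?thesis
      by (rule exI[of _ "Quat 0 0 1 0"]) (use sl True \<open>qim_i I \<noteq> 0\<close> in force)
  next
    case False
    show ?thesis
      by (rule exI[of _ "Quat 0 1 0 0"]) (use sl False in force)
  qed
qed

lemma not_iii:
  assumes "imag_unit I" "(g::'a::ab_group_add) + g \<noteq> 0"
  shows "\<exists>\<chi>. \<chi> \<in> (Gdelta :: ('a \<Rightarrow> quat) set) \<and> \<chi> \<notin> Ghat I \<and> \<not> qis_real (\<chi> g)"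
proof -
  obtain \<psi> :: "'a \<Rightarrow> complex" where p: "\<forall>x. cmod (\<psi> x) = 1" "\<forall>x y. \<psi> (x + y) = \<psi> x * \<psi> y" "Im (\<psi> g) \<noteq> 0"
    using char_exists[OF assms(2)] by blast
  obtain J where J: "(qim_i J)\<^sup>2 + (qim_j J)\<^sup>2 + (qim_k J)\<^sup>2 = 1" "\<forall>z. emb J z \<in> slice I \<longrightarrow> Im z = 0"
    using exists_J[OF assms(1)] by blast
  define \<chi> where "\<chi> x = emb J (\<psi> x)" for x
  have c: "\<chi> \<in> Gdelta"
    unfolding Gdelta_def qsphere_def using p J
    by (auto simp: \<chi>_def qnorm_nsq emb_nsq qmul_eq emb_mult)
  moreover have "\<chi> \<notin> Ghat I" using J(2) p(3) by (auto simp: Ghat_def \<chi>_def)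
  moreover have "\<not> qis_real (\<chi> g)"
    using J(1) p(3) by (auto simp: qis_real_iff \<chi>_def emb_def power2_eq_square)
  ultimately show ?thesis by blast
qed

theorem mainTheorem14:
  fixes I :: quat
  assumes "imag_unit I"
  shows "((Ghat I :: ('a::ab_group_add \<Rightarrow> quat) set) = Gdelta
            \<longleftrightarrow> (\<forall>\<phi>\<in>(PH_star :: ('a \<Rightarrow> quat) set). \<forall>g. qis_real (\<phi> g)))
       \<and> ((\<forall>\<phi>\<in>(PH_star :: ('a \<Rightarrow> quat) set). \<forall>g. qis_real (\<phi> g))
            \<longleftrightarrow> (\<forall>g::'a. g + g = 0))"
proof -
  have iii_ii: "(\<forall>g::'a. g + g = 0) \<Longrightarrow> (\<forall>\<phi>\<in>(PH_star :: ('a \<Rightarrow> quat) set). \<forall>g. qis_real (\<phi> g))"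
    using pd2 by (auto simp: PH_star_def)
  have ii_iii: "(\<forall>\<phi>\<in>(PH_star :: ('a \<Rightarrow> quat) set). \<forall>g. qis_real (\<phi> g)) \<Longrightarrow> (\<forall>g::'a. g + g = 0)"
    using not_iii[OF assms] Gdelta_PH by blast
  have i_iii: "(Ghat I :: ('a \<Rightarrow> quat) set) = Gdelta \<Longrightarrow> (\<forall>g::'a. g + g = 0)"
    using not_iii[OF assms] by blast
  show ?thesis using iii_ii ii_iii i_iii iii_i by blast
qed

end
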